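(* Let $p$ be an odd prime, $m$ a positive integer, $q=p^m$, $u$ a positive integer and $v=\gcd(m,u)$. Let $\mathrm{Tr}$ denote the trace map from $\mathbb{F}_q$ to $\mathbb{F}_p$, $\zeta_p=e^{2\pi\sqrt{-1}/p}$, $\eta$ the quadratic multiplicative character of $\mathbb{F}_q$, and $G(\eta)=\sum_{x\in\mathbb{F}_q^*}\eta(x)\zeta_p^{\mathrm{Tr}(x)}$. Let \[ D_1=\{(x,y)\in\mathbb{F}_q^2\setminus\{(0,0)\} : \mathrm{Tr}(x+y^{p^u+1})=0\}, \] and $C_{D_1}=\{c(a,b)=(\mathrm{Tr}(ax+by))_{(x,y)\in D_1} : a,b\in\mathbb{F}_q\}$. If $\frac{m}{v}$ is odd and $v$ is even, then $C_{D_1}$ is a $[p^{2m-1}-1,2m]$ three-weight linear code over $\mathbb{F}_p$ whose weight distribution is: weight $0$ with multiplicity $1$; weight $(p-1)p^{2m-2}$ with multiplicity $p^{2m}-1-(p-1)p^m$; weight $(p-1)p^{2m-2}\left(1-\frac{G(\eta)}{q}\right)$ with multiplicity $(p-1)p^{m-1}\left(1+\frac{(p-1)G(\eta)}{q}\right)$; and weight $(p-1)p^{2m-2}\left(1+\frac{G(\eta)}{(p-1)q}\right)$ with multiplicity $(p-1)p^{m-1}\left(p-1-\frac{(p-1)G(\eta)}{q}\right)$.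
   Context: An $[n,k]$ linear code over $\mathbb{F}_p$ is a $k$-dimensional subspace of $\mathbb{F}_p^n$. The multiplicity of a weight $w$ is the number of codewords of Hamming weight $w$; a code is $t$-weight if exactly $t$ nonzero weights occur. *)

theory Defs
  imports "HOL-Analysis.Analysis"
begin

text \<open>Finite field F_q, q = p^m, modelled as a finite field type 'a with CARD('a) = p^m.
  The absolute trace Tr : F_q -> F_p is Tr(x) = sum_{i<m} x^(p^i); its values lie in the
  prime field, which we identify with the image of {0..p-1} under of_nat.\<close>

definition trace :: "nat \<Rightarrow> nat \<Rightarrow> 'a::field \<Rightarrow> 'a" where
  "trace p m x = (\<Sum>i<m. x ^ (p ^ i))"

definition trace_nat :: "nat \<Rightarrow> nat \<Rightarrow> 'a::field \<Rightarrow> nat" where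
  "trace_nat p m x = (THE k. k < p \<and> of_nat k = trace p m x)"

definition quad_char :: "'a::field \<Rightarrow> complex" where
  "quad_char x = (if x = 0 then 0 else if (\<exists>y. y ^ 2 = x) then 1 else -1)"

definition zeta :: "nat \<Rightarrow> complex" where
  "zeta p = exp (2 * of_real pi * \<i> / of_nat p)"

definition gauss_quad :: "nat \<Rightarrow> nat \<Rightarrow> 'a::{finite,field} itself \<Rightarrow> complex" where
  "gauss_quad p m _ = (\<Sum>x\<in>(UNIV - {0::'a}). quad_char x * zeta p ^ trace_nat p m x)"

definition D1 :: "nat \<Rightarrow> nat \<Rightarrow> nat \<Rightarrow> ('a::field \<times> 'a) set" where
  "D1 p m u = {(x, y). (x, y) \<noteq> (0, 0) \<and> trace p m (x + y ^ (p ^ u + 1)) = 0}"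

definition codeword :: "nat \<Rightarrow> nat \<Rightarrow> nat \<Rightarrow> 'a::field \<Rightarrow> 'a \<Rightarrow> ('a \<times> 'a \<Rightarrow> 'a)" where
  "codeword p m u a b = (\<lambda>(x, y). if (x, y) \<in> D1 p m u then trace p m (a * x + b * y) else 0)"

definition code_CD1 :: "nat \<Rightarrow> nat \<Rightarrow> nat \<Rightarrow> ('a::field \<times> 'a \<Rightarrow> 'a) set" where
  "code_CD1 p m u = {codeword p m u a b | a b. True}"

definition hweight :: "nat \<Rightarrow> nat \<Rightarrow> nat \<Rightarrow> ('a::field \<times> 'a \<Rightarrow> 'a) \<Rightarrow> nat" where
  "hweight p m u c = card {z \<in> D1 p m u. c z \<noteq> 0}"

end

theory Submission
  imports Defs "HOL-Computational_Algebra.Computational_Algebra" "HOL-Number_Theory.Number_Theory"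
begin

lemma roots_bound:
  fixes R :: "'a::field poly"
  assumes "N > 0" "degree R < N"
  shows "card {x::'a. x ^ N + poly R x = 0} \<le> N"
proof -
  let ?P = "Polynomial.monom 1 N + R"
  have dP: "degree ?P = N"
    using assms by (simp add: degree_add_eq_left degree_monom_eq)
  have "?P \<noteq> 0" using dP assms(1) by auto
  hence "card {x. poly ?P x = 0} \<le> degree ?P" by (rule card_poly_roots_bound)
  thus ?thesis using dP by (simp add: poly_monom)
qed

lemma geo: "(p::nat) > 0 \<Longrightarrow> (p - 1) * (\<Sum>i<n. p ^ i) = p ^ n - 1"
proof (induction n)
  case (Suc n)
  have "p ^ n \<ge> 1" using Suc.prems by simp
  then show ?case using Suc by (simp add: algebra_simps diff_mult_distrib)
qed simp
lemma ev: "odd (p::nat) \<Longrightarrow> even (\<Sum>i<2*n. p ^ i)"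
proof (induction n)
  case (Suc n)
  have "(\<Sum>i<2*Suc n. p ^ i) = (\<Sum>i<2*n. p ^ i) + (p ^ (2*n) + p ^ Suc (2*n))" by simp
  moreover have "odd (p ^ (2*n))" "odd (p ^ Suc (2*n))" using Suc.prems by simp_all
  ultimately show ?case using Suc by simp
qed simp
lemma gcd2: fixes m u v :: nat assumes "v = gcd m u" "odd (m div v)" "m > 0" shows "gcd (2 * u) m = v"
proof -
  have vm1: "v dvd m" unfolding assms(1) by (rule gcd_dvd1)
  have vm2: "v dvd u" unfolding assms(1) by (rule gcd_dvd2)
  note vm = vm1 vm2
  have v0: "v > 0" using assms by simp
  obtain mq w where mq: "m = v * mq" and w: "u = v * w" using vm by (auto elim!: dvdE)
  have mqo: "odd mq" using assms(2) mq v0 by simp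
  have "coprime (m div gcd m u) (u div gcd m u)" using div_gcd_coprime[of m u] assms(3) by simp
  hence "coprime (m div v) (u div v)" using assms(1) by simp
  hence cop: "coprime mq w" using mq w v0 by simp
  have "gcd (2 * u) m = v * gcd (2 * w) mq" using mq w gcd_mult_distrib_nat[of v "2*w" mq] by (simp add: ac_simps)
  moreover have "coprime (2 * w) mq" using cop mqo by (simp add: coprime_commute)
  ultimately show ?thesis by simp
qed
lemma oddk: assumes "odd (p::nat)" "even u" shows "odd ((p ^ u + 1) div 2)"
proof -
  obtain r where r: "u = 2 * r" using assms(2) by blast
  obtain s where s: "p ^ r = 2 * s + 1" proof -
    have "odd (p ^ r)" using assms(1) by simp
    thus ?thesis using that oddE by blast
  qed
  have "p ^ u = (p ^ r) ^ 2" using r power_mult[of p r 2] by (simp add: mult.commute)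
  hence "p ^ u = (2 * s + 1) ^ 2" using s by simp
  hence "(p ^ u + 1) div 2 = 2 * (s * s + s) + 1" by (simp add: power2_eq_square algebra_simps)
  thus ?thesis by simp
qed

locale ffield =
  fixes p m :: nat and TYP :: "'a::{finite,field} itself"
  assumes p_prime: "prime p" and p_odd: "odd p" and m_pos: "m > 0"
    and card_a: "CARD('a) = p ^ m"
begin

lemma p_gt1: "p > 1" using p_prime prime_gt_1_nat by blast
lemma p_ge3: "p \<ge> 3" using p_gt1 p_odd by presburger

lemma char_p: "CHAR('a) = p"
proof -
  have pos: "CHAR('a) > 0" by (rule finite_imp_CHAR_pos) simp
  hence pr: "prime CHAR('a)" by (rule prime_CHAR_semidom)
  have "CHAR('a) dvd p ^ m" using CHAR_dvd_CARD[where 'a='a] card_a by simp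
  hence "CHAR('a) dvd p" using pr prime_dvd_power by blast
  thus ?thesis using pr p_prime primes_dvd_imp_eq by blast
qed

lemma of_nat_p [simp]: "of_nat p = (0::'a)"
  using of_nat_CHAR[where 'a='a] char_p by simp

lemma of_nat_eq_iff: "(of_nat i = (of_nat j::'a)) \<longleftrightarrow> i mod p = j mod p"
  using of_nat_eq_iff_cong_CHAR[where 'a='a] char_p by (simp add: cong_def)

lemma frob_add: "((x::'a) + y) ^ (p ^ n) = x ^ (p ^ n) + y ^ (p ^ n)"
  by (rule freshmans_dream') (simp_all add: char_p p_prime)

lemma frob_sum: "(\<Sum>i\<in>A. f i) ^ (p ^ n) = (\<Sum>i\<in>A. (f i :: 'a) ^ (p ^ n))"
  by (rule freshmans_dream_sum') (simp_all add: char_p p_prime)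

lemma odd_pn: "odd (p ^ n)" using p_odd by simp

lemma frob_neg: "(- (x::'a)) ^ (p ^ n) = - (x ^ (p ^ n))"
  using odd_pn by simp

lemma frob_diff: "((x::'a) - y) ^ (p ^ n) = x ^ (p ^ n) - y ^ (p ^ n)"
  using frob_add[of x "-y" n] frob_neg[of y n] by simp

lemma pow_card: "(x::'a) ^ (p ^ m) = x"
proof (cases "x = 0")
  case False
  let ?n = "card (UNIV :: 'a set)"
  have "x * (\<Prod>y\<in>UNIV-{0}. x * y) = x * x ^ (?n - 1) * \<Prod>(UNIV-{0})"
    by (simp add: prod.distrib mult_ac)
  also have "x * x ^ (?n - 1) = x ^ Suc (?n - 1)"
    by (subst power_Suc) auto
  also have "Suc (?n - 1) = ?n"
    using finite_UNIV_card_ge_0[where ?'a = 'a] by simp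
  also have "(\<Prod>y\<in>UNIV-{0}. x * y) = (\<Prod>y\<in>UNIV-{0}. y)"
    by (rule prod.reindex_bij_witness[of _ "\<lambda>y. y / x" "\<lambda>y. x * y"]) (use False in auto)
  finally show ?thesis using card_a
    by simp
qed (use m_pos p_gt1 in auto)

lemma pow_card_mult: "(x::'a) ^ (p ^ (m * k)) = x"
proof (induction k)
  case (Suc k)
  have "x ^ (p ^ (m * Suc k)) = (x ^ (p ^ (m * k))) ^ (p ^ m)"
    by (simp add: power_add power_mult[symmetric] mult.commute)
  thus ?case using Suc pow_card by simp
qed simp

definition Fix :: "nat \<Rightarrow> 'a \<Rightarrow> bool" where "Fix n x \<longleftrightarrow> x ^ (p ^ n) = x"

lemma Fix_add: "Fix a x \<Longrightarrow> Fix b x \<Longrightarrow> Fix (a + b) x"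
  unfolding Fix_def by (simp add: power_add power_mult)

lemma Fix_mult: "Fix a x \<Longrightarrow> Fix (a * k) x"
  by (induction k) (auto simp: Fix_def Fix_add[unfolded Fix_def] add.commute)

lemma Fix_sub: "Fix (a + b) x \<Longrightarrow> Fix b x \<Longrightarrow> Fix a x"
proof -
  assume "Fix (a + b) x" "Fix b x"
  hence "x = x ^ (p ^ b * p ^ a)" unfolding Fix_def by (simp add: power_add mult.commute)
  hence "x = (x ^ (p ^ b)) ^ (p ^ a)" by (simp add: power_mult)
  thus ?thesis using \<open>Fix b x\<close> unfolding Fix_def by simp
qed

lemma Fix_mod: "Fix a x \<Longrightarrow> Fix b x \<Longrightarrow> Fix (a mod b) x"
proof -
  assume a: "Fix a x" and b: "Fix b x"
  have "Fix (b * (a div b)) x" using Fix_mult[OF b] .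
  moreover have "a = a mod b + b * (a div b)" by simp
  ultimately show ?thesis using a Fix_sub by metis
qed

lemma Fix_gcd: "Fix a x \<Longrightarrow> Fix b x \<Longrightarrow> Fix (gcd a b) x"
proof (induction a b rule: gcd_nat_induct)
  case (step m n)
  then show ?case using Fix_mod by (metis gcd_red_nat)
qed simp

lemma Fix_m: "Fix m x" using pow_card unfolding Fix_def .

abbreviation Tr :: "'a \<Rightarrow> 'a" where "Tr \<equiv> trace p m"

lemma tr_add: "Tr (x + y) = Tr x + Tr y"
  unfolding trace_def by (simp add: frob_add sum.distrib)

lemma tr_neg: "Tr (- x) = - Tr x"
  unfolding trace_def by (simp add: frob_neg sum_negf)

lemma tr_diff: "Tr (x - y) = Tr x - Tr y"
  using tr_add[of x "-y"] tr_neg[of y] by simp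

lemma tr_zero [simp]: "Tr 0 = 0"
  unfolding trace_def using p_gt1 by (simp add: power_0_left)

lemma shift_sum: "(\<Sum>i<m. (x::'a) ^ (p ^ Suc i)) = (\<Sum>i<m. x ^ (p ^ i))"
proof -
  have "(\<Sum>i<Suc m. x ^ (p ^ i)) = x ^ (p ^ 0) + (\<Sum>i<m. x ^ (p ^ Suc i))"
    by (rule sum.lessThan_Suc_shift)
  moreover have "(\<Sum>i<Suc m. x ^ (p ^ i)) = (\<Sum>i<m. x ^ (p ^ i)) + x ^ (p ^ m)" by simp
  ultimately show ?thesis using pow_card by simp
qed

lemma tr_pow_p: "Tr (x ^ p) = Tr x"
  unfolding trace_def using shift_sum[of x]
  by (simp add: power_mult[symmetric] mult.commute)

lemma tr_frob: "Tr (x ^ (p ^ j)) = Tr x"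
proof (induction j)
  case (Suc j)
  have "x ^ (p ^ Suc j) = (x ^ (p ^ j)) ^ p" by (simp add: power_mult[symmetric] mult.commute)
  then show ?case using Suc tr_pow_p by simp
qed simp

lemma tr_p: "(Tr x) ^ p = Tr x"
  unfolding trace_def using frob_sum[of "\<lambda>i. x ^ (p ^ i)" "{..<m}" 1] shift_sum[of x]
  by (simp add: power_mult[symmetric] mult.commute)

definition Fp :: "'a set" where "Fp = {x. x ^ p = x}"

lemma of_nat_Fp: "(of_nat n :: 'a) \<in> Fp"
proof (induction n)
  case 0 then show ?case using p_gt1 by (simp add: Fp_def)
next
  case (Suc n)
  have "(of_nat n + 1 :: 'a) ^ (p ^ 1) = of_nat n ^ (p ^ 1) + 1 ^ (p ^ 1)" by (rule frob_add)
  then show ?case using Suc by (simp add: Fp_def add.commute)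
qed

lemma of_nat_inj: "i < p \<Longrightarrow> j < p \<Longrightarrow> of_nat i = (of_nat j :: 'a) \<Longrightarrow> i = j"
  using of_nat_eq_iff by simp

lemma card_img: "card ((of_nat :: nat \<Rightarrow> 'a) ` {..<p}) = p"
  using of_nat_inj by (subst card_image) (auto simp: inj_on_def)

lemma Fp_eq: "Fp = (of_nat :: nat \<Rightarrow> 'a) ` {..<p}"
proof -
  have sub: "(of_nat :: nat \<Rightarrow> 'a) ` {..<p} \<subseteq> Fp" using of_nat_Fp by auto
  have "card Fp \<le> p"
  proof -
    have "card {x::'a. x ^ p + poly [:0, -1:] x = 0} \<le> p"
      by (rule roots_bound) (use p_gt1 in auto)
    moreover have "{x::'a. x ^ p + poly [:0, -1:] x = 0} = Fp" by (auto simp: Fp_def)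
    ultimately show ?thesis by simp
  qed
  thus ?thesis using sub card_img by (metis card_seteq finite)
qed

lemma card_Fp: "card Fp = p" using Fp_eq card_img by simp

lemma Fp_pow: "c \<in> Fp \<Longrightarrow> c ^ (p ^ n) = c"
proof (induction n)
  case (Suc n)
  have "c ^ (p ^ Suc n) = (c ^ (p ^ n)) ^ p" by (simp add: power_mult[symmetric] mult.commute)
  then show ?case using Suc by (simp add: Fp_def)
qed simp

lemma Fp_add: "a \<in> Fp \<Longrightarrow> b \<in> Fp \<Longrightarrow> a + b \<in> Fp"
  using frob_add[of a b 1] by (simp add: Fp_def)
lemma Fp_neg: "a \<in> Fp \<Longrightarrow> - a \<in> Fp"
  using frob_neg[of a 1] by (simp add: Fp_def)
lemma Fp_diff: "a \<in> Fp \<Longrightarrow> b \<in> Fp \<Longrightarrow> a - b \<in> Fp"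
  using frob_diff[of a b 1] by (simp add: Fp_def)
lemma Fp_mult: "a \<in> Fp \<Longrightarrow> b \<in> Fp \<Longrightarrow> a * b \<in> Fp"
  by (simp add: Fp_def power_mult_distrib)
lemma Fp_divide: "a \<in> Fp \<Longrightarrow> b \<in> Fp \<Longrightarrow> a / b \<in> Fp"
  by (simp add: Fp_def power_divide)
lemma Fp_0: "0 \<in> Fp" using of_nat_Fp[of 0] by simp
lemma Fp_1: "1 \<in> Fp" using of_nat_Fp[of 1] by simp

lemma tr_Fp: "Tr x \<in> Fp" using tr_p by (simp add: Fp_def)

lemma tr_scal: "c \<in> Fp \<Longrightarrow> Tr (c * x) = c * Tr x"
  unfolding trace_def by (simp add: power_mult_distrib Fp_pow sum_distrib_left)

end

lemma card_fibers: "finite S \<Longrightarrow> finite T \<Longrightarrow> g ` S \<subseteq> T \<Longrightarrow> card S = (\<Sum>y\<in>T. card {x\<in>S. g x = y})"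
proof -
  assume a: "finite S" "finite T" "g ` S \<subseteq> T"
  have "(\<Sum>y\<in>T. sum (\<lambda>_. 1::nat) {x \<in> S. g x = y}) = sum (\<lambda>_. 1) S"
    by (rule sum.group) (use a in auto)
  thus ?thesis by simp
qed

lemma card_filter_sum: "finite A \<Longrightarrow> card {x\<in>A. P x} = (\<Sum>x\<in>A. if P x then 1 else 0)"
  using sum.inter_filter[of A "\<lambda>_. 1::nat" P] by simp

lemma card_pairs: "card {(x::'b::finite, y::'c::finite). P x y} = (\<Sum>y\<in>UNIV. card {x. P x y})"
proof -
  have "{(x, y). P x y} = (\<lambda>(y, x). (x, y)) ` (SIGMA y:UNIV. {x. P x y})" by auto
  moreover have "inj_on (\<lambda>(y, x). (x, y)) (SIGMA y:UNIV. {x::'b. P x y})" by (auto simp: inj_on_def)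
  ultimately have "card {(x, y). P x y} = card (SIGMA y:UNIV. {x::'b. P x y})" by (simp add: card_image)
  also have "\<dots> = (\<Sum>y\<in>UNIV. card {x. P x y})" by (rule card_SigmaI) auto
  finally show ?thesis .
qed

context ffield
begin

lemma pm: "p * p ^ (m - 1) = p ^ m"
  using m_pos by (cases m) simp_all

lemma tr_poly: "Tr x = x ^ (p ^ (m - 1)) + poly (\<Sum>i<m-1. Polynomial.monom 1 (p ^ i)) x"
proof -
  have "m = Suc (m - 1)" using m_pos by simp
  hence "Tr x = (\<Sum>i<Suc (m-1). x ^ (p ^ i))" unfolding trace_def by metis
  thus ?thesis by (simp add: poly_sum poly_monom)
qed

lemma card_ker: "card {x::'a. Tr x = 0} \<le> p ^ (m - 1)"
proof -
  let ?R = "(\<Sum>i<m-1. Polynomial.monom (1::'a) (p ^ i))"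
  have pos: "0 < p ^ (m - 1)" using p_gt1 by simp
  have "degree ?R \<le> p ^ (m - 1) - 1"
  proof (rule degree_sum_le)
    fix i assume "i \<in> {..<m-1}"
    hence "p ^ i < p ^ (m - 1)" using p_gt1 by (simp add: power_strict_increasing)
    thus "degree (Polynomial.monom (1::'a) (p ^ i)) \<le> p ^ (m - 1) - 1"
      using degree_monom_le[of "1::'a" "p^i"] by linarith
  qed simp
  hence deg: "degree ?R < p ^ (m - 1)" using pos by linarith
  have "card {x::'a. x ^ (p ^ (m - 1)) + poly ?R x = 0} \<le> p ^ (m - 1)"
    by (rule roots_bound[OF pos deg])
  moreover have "{x::'a. Tr x = 0} = {x::'a. x ^ (p ^ (m - 1)) + poly ?R x = 0}"
    by (simp only: tr_poly)
  ultimately show ?thesis by simp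
qed

lemma fiber_le: "card {x::'a. Tr x = t} \<le> card {x::'a. Tr x = 0}"
proof (cases "\<exists>x0. Tr x0 = t")
  case True
  then obtain x0 where x0: "Tr x0 = t" by blast
  have "{x. Tr x = t} = (\<lambda>k. x0 + k) ` {x. Tr x = 0}"
  proof -
    have "x \<in> (\<lambda>k. x0 + k) ` {x. Tr x = 0}" if "Tr x = t" for x
    proof -
      have "x = x0 + (x - x0)" "Tr (x - x0) = 0" using x0 tr_diff that by auto
      thus ?thesis by blast
    qed
    thus ?thesis by (auto simp: tr_add x0)
  qed
  thus ?thesis by (simp add: card_image)
qed simp

lemma tr_fiber: assumes "t \<in> Fp" shows "card {x::'a. Tr x = t} = p ^ (m - 1)"
proof -
  have eq: "p ^ m = (\<Sum>y\<in>Fp. card {x::'a. Tr x = y})"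
    using card_fibers[of "UNIV::'a set" Fp Tr] tr_Fp card_a by auto
  have le: "\<And>y. card {x::'a. Tr x = y} \<le> p ^ (m - 1)" using fiber_le card_ker le_trans by blast
  have "(\<Sum>y\<in>Fp. card {x::'a. Tr x = y}) = (\<Sum>y\<in>Fp. p ^ (m - 1))"
  proof (rule antisym)
    show "(\<Sum>y\<in>Fp. card {x::'a. Tr x = y}) \<le> (\<Sum>y\<in>Fp. p ^ (m - 1))" by (rule sum_mono) (rule le)
    show "(\<Sum>y\<in>Fp. p ^ (m - 1)) \<le> (\<Sum>y\<in>Fp. card {x::'a. Tr x = y})" using eq card_Fp pm by simp
  qed
  from sum_mono_inv[OF this] show ?thesis using le assms by auto
qed

lemma tr_fiber_scaled: assumes "d \<noteq> 0" "t \<in> Fp" shows "card {x::'a. Tr (d * x) = t} = p ^ (m - 1)"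
proof -
  have "{x::'a. Tr (d * x) = t} = (\<lambda>y. y / d) ` {y. Tr y = t}"
  proof
    show "{x::'a. Tr (d * x) = t} \<subseteq> (\<lambda>y. y / d) ` {y. Tr y = t}"
    proof
      fix x assume "x \<in> {x::'a. Tr (d * x) = t}"
      hence "d * x \<in> {y. Tr y = t}" "x = (d * x) / d" using assms(1) by auto
      thus "x \<in> (\<lambda>y. y / d) ` {y. Tr y = t}" by (rule rev_image_eqI)
    qed
    show "(\<lambda>y. y / d) ` {y. Tr y = t} \<subseteq> {x::'a. Tr (d * x) = t}" using assms(1) by auto
  qed
  moreover have "inj_on (\<lambda>y. y / d) {y. Tr y = t}" using assms(1) by (auto simp: inj_on_def)
  ultimately show ?thesis using tr_fiber[OF assms(2)] by (simp add: card_image)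
qed

lemma tr_fiber_compl: assumes "t \<in> Fp" shows "card {x::'a. Tr x \<noteq> t} = p ^ m - p ^ (m - 1)"
proof -
  have "{x::'a. Tr x \<noteq> t} = UNIV - {x. Tr x = t}" by auto
  thus ?thesis using tr_fiber[OF assms] card_a by (simp add: card_Diff_subset)
qed

lemma m_ge2: assumes "a \<notin> Fp" shows "m \<ge> 2"
proof (rule ccontr)
  assume "\<not> m \<ge> 2"
  hence "m = 1" using m_pos by simp
  hence "card Fp = card (UNIV :: 'a set)" using card_Fp card_a by simp
  hence "Fp = UNIV" by (simp add: card_subset_eq)
  thus False using assms by simp
qed


lemma sum_if_const: "finite A \<Longrightarrow> (\<Sum>x\<in>A. if P x then c else 0) = card {x\<in>A. P x} * (c::nat)"
  using sum.inter_filter[of A "\<lambda>_. c" P] by simp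

lemma tr_two: assumes "a \<notin> Fp" "c1 \<in> Fp" "c2 \<in> Fp"
  shows "card {x::'a. Tr x = c1 \<and> Tr (a * x) = c2} = p ^ (m - 2)"
proof -
  let ?P = "p ^ (m - 1)"
  let ?N = "card {x::'a. Tr x = c1 \<and> Tr (a * x) = c2}"
  define S where "S l = {x::'a. Tr ((a - l) * x) = c2 - l * c1}" for l
  have S_card: "card (S l) = ?P" if "l \<in> Fp" for l
    unfolding S_def using assms that
    by (intro tr_fiber_scaled) (auto intro: Fp_diff Fp_mult)
  have S_alt: "x \<in> S l \<longleftrightarrow> Tr (a * x) - l * Tr x = c2 - l * c1" if "l \<in> Fp" for l x
    unfolding S_def using that by (simp add: left_diff_distrib tr_diff tr_scal)
  have S_sum: "card (S l) = (\<Sum>x\<in>UNIV. if x \<in> S l then 1 else 0)" for l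
  proof -
    have "card (S l) = card {x\<in>UNIV. x \<in> S l}" by simp
    also have "\<dots> = (\<Sum>x\<in>UNIV. if x \<in> S l then 1 else 0)" by (rule card_filter_sum) simp
    finally show ?thesis .
  qed
  have inner: "(\<Sum>l\<in>Fp. if x \<in> S l then 1 else 0) = (if Tr x = c1 \<and> Tr (a * x) = c2 then p else 0) + (if Tr x \<noteq> c1 then 1 else 0)" for x
  proof -
    have "(\<Sum>l\<in>Fp. if x \<in> S l then 1 else 0) = card {l\<in>Fp. x \<in> S l}"
      by (rule card_filter_sum[symmetric]) simp
    also have "\<dots> = (if Tr x = c1 \<and> Tr (a * x) = c2 then p else 0) + (if Tr x \<noteq> c1 then 1 else 0)"
    proof (cases "Tr x = c1")
      case True
      hence "{l\<in>Fp. x \<in> S l} = (if Tr (a * x) = c2 then Fp else {})" using S_alt by auto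
      thus ?thesis using True card_Fp by simp
    next
      case False
      let ?l = "(Tr (a * x) - c2) / (Tr x - c1)"
      have "?l \<in> Fp" using assms tr_Fp by (intro Fp_divide Fp_diff) auto
      moreover have "x \<in> S l \<longleftrightarrow> l = ?l" if "l \<in> Fp" for l
      proof -
        have "Tr x - c1 \<noteq> 0" using False by simp
        hence "(Tr (a * x) - l * Tr x = c2 - l * c1) \<longleftrightarrow> l = ?l"
          by (auto simp: field_simps)
        thus ?thesis using S_alt[OF that] by simp
      qed
      ultimately have "{l\<in>Fp. x \<in> S l} = {?l}" by auto
      thus ?thesis using False by simp
    qed
    finally show ?thesis .
  qed
  have "p * ?P = (\<Sum>l\<in>Fp. card (S l))" using S_card card_Fp by simp
  also have "\<dots> = (\<Sum>l\<in>Fp. \<Sum>x\<in>UNIV. if x \<in> S l then 1 else 0)"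
    using S_sum by simp
  also have "\<dots> = (\<Sum>x\<in>UNIV. \<Sum>l\<in>Fp. if x \<in> S l then 1 else 0)" by (rule sum.swap)
  also have "\<dots> = (\<Sum>x\<in>UNIV. (if Tr x = c1 \<and> Tr (a * x) = c2 then p else 0) + (if Tr x \<noteq> c1 then 1 else 0))"
    using inner by simp
  also have "\<dots> = (\<Sum>x\<in>UNIV. if Tr x = c1 \<and> Tr (a * x) = c2 then p else 0) + (\<Sum>x\<in>UNIV. if Tr x \<noteq> c1 then 1 else 0)"
    by (rule sum.distrib)
  also have "\<dots> = ?N * p + card {x::'a. Tr x \<noteq> c1} * 1"
    using sum_if_const[of "UNIV::'a set"] by simp
  finally have "p * ?P = p * ?N + (p ^ m - ?P)"
    using tr_fiber_compl[OF assms(2)] by simp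
  moreover have "p * ?P = p ^ m" by (rule pm)
  moreover have "?P \<le> p ^ m" using p_gt1 by (simp add: power_increasing)
  ultimately have "p * ?N = ?P" by linarith
  moreover have "?P = p * p ^ (m - 2)"
  proof -
    have "m - 1 = Suc (m - 2)" using m_ge2[OF assms(1)] by arith
    thus ?thesis by simp
  qed
  ultimately show ?thesis using p_gt1 by simp
qed
end


locale qf = ffield +
  fixes u v :: nat
  assumes u_pos: "u > 0" and v_def: "v = gcd m u" and odd_mv: "odd (m div v)" and even_v: "even v"
begin

lemma v_dvd_u: "v dvd u" unfolding v_def by (rule gcd_dvd2)
lemma v_dvd_m: "v dvd m" unfolding v_def by (rule gcd_dvd1)
lemma m_even: "even m" using v_dvd_m even_v by (metis dvd_trans)
lemma u_even: "even u" using v_dvd_u even_v by (metis dvd_trans)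
lemma gcd2u: "gcd (2 * u) m = v" using gcd2[OF v_def odd_mv m_pos] .
lemma m_ge2': "m \<ge> 2" using m_even m_pos by presburger

lemma two_ne0: "(2::'a) \<noteq> 0"
proof
  assume "(2::'a) = 0"
  hence "of_nat 2 = (of_nat 0 :: 'a)" by simp
  hence "2 mod p = 0 mod p" using of_nat_eq_iff by blast
  thus False using p_ge3 by simp
qed

lemma neg_self: "(x::'a) = - x \<Longrightarrow> x = 0"
proof -
  assume "x = - x"
  hence "x + x = 0" by (metis add.right_inverse)
  hence "2 * x = 0" by (metis mult_2)
  thus "x = 0" using two_ne0 by (metis mult_eq_0_iff)
qed

definition kk :: nat where "kk = (p ^ u + 1) div 2"
lemma e_eq: "p ^ u + 1 = 2 * kk"
proof -
  have "odd (p ^ u)" using p_odd by simp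
  thus ?thesis unfolding kk_def by presburger
qed
lemma kk_odd: "odd kk" unfolding kk_def using oddk[OF p_odd u_even] .

definition Q :: "'a \<Rightarrow> 'a" where "Q y = Tr (y ^ (p ^ u + 1))"

lemma Fix_2u_u: "Fix (2 * u) x \<Longrightarrow> Fix u x"
proof -
  assume "Fix (2 * u) x"
  hence "Fix v x" using Fix_gcd[of "2*u" x m] Fix_m gcd2u by simp
  hence "Fix (v * (u div v)) x" by (rule Fix_mult)
  thus "Fix u x" using v_dvd_u by simp
qed

definition Lf :: "'a \<Rightarrow> 'a" where "Lf z = z ^ (p ^ u) + z ^ (p ^ (m * u - u))"

lemma pu_mu: "u + (m * u - u) = m * u"
proof -
  have "u \<le> m * u" using m_pos by (cases m) auto
  thus ?thesis by arith
qed

lemma pow_pow: "((x::'a) ^ (p ^ a)) ^ (p ^ b) = x ^ (p ^ (a + b))"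
  by (simp add: power_mult[symmetric] power_add)

lemma tr_swap: "Tr (y ^ (p ^ u) * z) = Tr (y * z ^ (p ^ (m * u - u)))"
proof -
  have "Tr (y ^ (p ^ u) * z) = Tr ((y ^ (p ^ u) * z) ^ (p ^ (m * u - u)))" by (simp only: tr_frob)
  also have "(y ^ (p ^ u) * z) ^ (p ^ (m * u - u)) = (y ^ (p ^ u)) ^ (p ^ (m * u - u)) * z ^ (p ^ (m * u - u))"
    by (simp add: power_mult_distrib)
  also have "(y ^ (p ^ u)) ^ (p ^ (m * u - u)) = y" by (simp only: pow_pow pu_mu pow_card_mult)
  finally show ?thesis .
qed

lemma Q_add: "Q (y + z) = Q y + Q z + Tr (y * Lf z)"
proof -
  have "(y + z) ^ (p ^ u + 1) = (y ^ (p ^ u) + z ^ (p ^ u)) * (y + z)" by (simp add: frob_add)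
  also have "\<dots> = y ^ (p ^ u + 1) + z ^ (p ^ u + 1) + (y ^ (p ^ u) * z + y * z ^ (p ^ u))"
    by (simp add: algebra_simps)
  finally have "Q (y + z) = Q y + Q z + (Tr (y ^ (p ^ u) * z) + Tr (y * z ^ (p ^ u)))"
    unfolding Q_def by (simp add: tr_add)
  also have "Tr (y ^ (p ^ u) * z) + Tr (y * z ^ (p ^ u)) = Tr (y * Lf z)"
    unfolding Lf_def tr_swap by (simp add: tr_add[symmetric] algebra_simps)
  finally show ?thesis .
qed

lemma Q_zero [simp]: "Q 0 = 0" unfolding Q_def by simp

lemma Lf_diff: "Lf (y - z) = Lf y - Lf z"
  unfolding Lf_def by (simp add: frob_diff)

lemma Lf_zero: assumes "Lf z = 0" shows "z = 0"
proof -
  have a: "z ^ (p ^ (m * u - u)) = - (z ^ (p ^ u))" using assms unfolding Lf_def by (simp add: eq_neg_iff_add_eq_0 add.commute)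
  have "(z ^ (p ^ (m * u - u))) ^ (p ^ u) = z" by (simp only: pow_pow add.commute[of "m*u-u"] pu_mu pow_card_mult)
  moreover have "(- (z ^ (p ^ u))) ^ (p ^ u) = - (z ^ (p ^ (2 * u)))" by (simp only: frob_neg pow_pow mult_2)
  ultimately have "- (z ^ (p ^ (2 * u))) = z" using a by simp
  hence b: "z ^ (p ^ (2 * u)) = - z" by (metis minus_minus)
  have "(z ^ 2) ^ (p ^ (2 * u)) = z ^ 2"
  proof -
    have "(z ^ 2) ^ (p ^ (2 * u)) = (z ^ (p ^ (2 * u))) ^ 2" by (simp add: power_mult[symmetric] mult.commute)
    thus ?thesis using b by simp
  qed
  hence "Fix u (z ^ 2)" using Fix_2u_u unfolding Fix_def by blast
  hence "(z ^ (p ^ u)) ^ 2 = z ^ 2" unfolding Fix_def by (simp add: power_mult[symmetric] mult.commute)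
  hence "z ^ (p ^ u) = z \<or> z ^ (p ^ u) = - z" by (simp add: power2_eq_iff)
  moreover have "z ^ (p ^ (2 * u)) = (z ^ (p ^ u)) ^ (p ^ u)" by (simp only: pow_pow mult_2)
  ultimately have "z ^ (p ^ (2 * u)) = z"
    by (auto simp: frob_neg)
  hence "z = - z" using b by metis
  thus ?thesis by (rule neg_self)
qed

lemma Lf_inj: "inj Lf"
proof (rule injI)
  fix y z assume "Lf y = Lf z"
  hence "Lf (y - z) = 0" by (simp add: Lf_diff)
  thus "y = z" using Lf_zero[of "y - z"] by simp
qed

lemma Lf_bij: "bij Lf" using Lf_inj finite_UNIV_inj_surj[of Lf] by (simp add: bij_def)

lemma powk_inj: "inj (\<lambda>y::'a. y ^ kk)"
proof (rule injI)
  fix y z :: 'a assume yz: "y ^ kk = z ^ kk"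
  have kpos: "kk > 0" using kk_odd by presburger
  show "y = z"
  proof (cases "z = 0")
    case True thus ?thesis using yz kpos by (simp add: power_0_left)
  next
    case False
    define w where "w = y / z"
    have w1: "w ^ kk = 1" unfolding w_def using yz False by (simp add: power_divide)
    hence w0: "w \<noteq> 0" using kpos by (metis zero_power zero_neq_one)
    have "w ^ (p ^ u + 1) = 1" unfolding e_eq mult.commute[of 2 kk] power_mult using w1 by simp
    hence wi: "w ^ (p ^ u) = 1 / w" using w0 by (simp add: field_simps)
    have "w ^ (p ^ (2 * u)) = (w ^ (p ^ u)) ^ (p ^ u)" by (simp only: pow_pow mult_2)
    also have "\<dots> = w" using wi w0 by (simp add: power_divide)
    finally have "Fix u w" using Fix_2u_u unfolding Fix_def by blast
    hence "w ^ (p ^ u) = w" unfolding Fix_def .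
    hence "w * w = 1" using wi w0 by (simp add: field_simps)
    hence "w ^ 2 = 1 ^ 2" by (simp add: power2_eq_square)
    hence "w = 1 \<or> w = -1" using power2_eq_iff[of w 1] by simp
    moreover have "w \<noteq> -1"
    proof
      assume "w = -1"
      hence "(1::'a) = -1" using w1 kk_odd by simp
      thus False using neg_self[of 1] by simp
    qed
    ultimately have "w = 1" by blast
    thus ?thesis unfolding w_def using False by simp
  qed
qed

lemma Q_sq: "Q y = Tr ((y ^ kk) ^ 2)"
  unfolding Q_def e_eq by (simp add: power_mult[symmetric] mult.commute)

lemma Z_eq: "card {y. Q y = t} = card {y::'a. Tr (y ^ 2) = t}"
proof -
  have surj: "surj (\<lambda>y::'a. y ^ kk)" using finite_UNIV_inj_surj[OF _ powk_inj] by simp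
  have c: "card ((\<lambda>y. y ^ kk) -` {y::'a. Tr (y ^ 2) = t}) = card {y::'a. Tr (y ^ 2) = t}"
    by (rule card_vimage_inj[OF powk_inj]) (use surj in auto)
  have eq: "(\<lambda>y. y ^ kk) -` {y::'a. Tr (y ^ 2) = t} = {y. Q y = t}" by (auto simp: Q_sq)
  show ?thesis using c unfolding eq .
qed

end


context qf
begin

definition Z2 :: "'a \<Rightarrow> nat" where "Z2 t = card {y::'a. Tr (y ^ 2) = t}"

lemma M_eq: "(p ^ m - 1) div 2 = (p - 1) * ((\<Sum>i<m. p ^ i) div 2)"
proof -
  have T: "(p - 1) * (\<Sum>i<m. p ^ i) = p ^ m - 1" using geo p_gt1 by simp
  have "m = 2 * (m div 2)" using m_even by simp
  hence "even (\<Sum>i<m. p ^ i)" using ev[OF p_odd, of "m div 2"] by metis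
  then obtain T2 where "(\<Sum>i<m. p ^ i) = 2 * T2" by blast
  thus ?thesis using T by simp
qed

lemma Fp_unit_pow: assumes "c \<in> Fp" "c \<noteq> 0" shows "c ^ ((p ^ m - 1) div 2) = 1"
proof -
  have "c ^ p = c" using assms(1) by (simp add: Fp_def)
  hence "c * c ^ (p - 1) = c * 1" using p_gt1 by (metis mult.right_neutral power_eq_if not_one_less_zero gr_implies_not0 power_Suc_less_one)
  hence c1: "c ^ (p - 1) = 1" using assms(2) by simp
  show ?thesis unfolding M_eq power_mult c1 by simp
qed

lemma card_sq_fiber: assumes "r \<noteq> (0::'a)" shows "card {y\<in>UNIV - {0}. y ^ 2 = r ^ 2} = 2"
proof -
  have "{y\<in>UNIV - {0}. y ^ 2 = r ^ 2} = {r, -r}" using assms by (auto simp: power2_eq_iff)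
  moreover have "r \<noteq> - r" using assms neg_self by blast
  ultimately show ?thesis by simp
qed

lemma Fp_square: assumes "c \<in> Fp" shows "\<exists>r::'a. r ^ 2 = c"
proof (cases "c = 0")
  case True thus ?thesis by (intro exI[of _ 0]) simp
next
  case False
  let ?M = "(p ^ m - 1) div 2"
  let ?Sq = "(\<lambda>y::'a. y ^ 2) ` (UNIV - {0})"
  have "p ^ 1 \<le> p ^ m" by (rule power_increasing) (use m_pos p_gt1 in auto)
  hence q3: "p ^ m \<ge> 3" using p_ge3 by simp
  have "card (UNIV - {0::'a}) = (\<Sum>s\<in>?Sq. card {y\<in>UNIV - {0}. y ^ 2 = s})"
    by (rule card_fibers) auto
  also have "\<dots> = (\<Sum>s\<in>?Sq. 2)"
  proof (rule sum.cong[OF refl])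
    fix s assume "s \<in> ?Sq"
    then obtain r where "r \<noteq> 0" "s = r ^ 2" by auto
    thus "card {y\<in>UNIV - {0}. y ^ 2 = s} = 2" using card_sq_fiber by simp
  qed
  finally have "p ^ m - 1 = card ?Sq * 2" using card_a by (simp add: card_Diff_subset)
  hence cSq: "card ?Sq = ?M" by simp
  have sub: "?Sq \<subseteq> {x. x ^ ?M = 1}"
  proof
    fix x assume "x \<in> ?Sq"
    then obtain y where y: "y \<noteq> 0" "x = y ^ 2" by auto
    have "y * y ^ (p ^ m - 1) = y * 1" using pow_card q3
      by (metis Suc_pred' gr_implies_not0 mult.right_neutral not_gr0 power_Suc zero_less_numeral less_le_trans)
    hence "y ^ (p ^ m - 1) = 1" using y(1) by simp
    moreover have "p ^ m - 1 = 2 * ?M" using p_odd by simp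
    moreover have "(y ^ 2) ^ ?M = y ^ (2 * ?M)" by (simp only: power_mult)
    ultimately show "x \<in> {x. x ^ ?M = 1}" using y(2) by simp
  qed
  have "card {x::'a. x ^ ?M + poly [:-1:] x = 0} \<le> ?M"
    by (rule roots_bound) (use q3 in auto)
  moreover have "{x::'a. x ^ ?M + poly [:-1:] x = 0} = {x. x ^ ?M = 1}" by auto
  ultimately have "card {x::'a. x ^ ?M = 1} \<le> ?M" by simp
  hence "?Sq = {x. x ^ ?M = 1}" using sub cSq by (metis card_seteq finite)
  moreover have "c \<in> {x. x ^ ?M = 1}" using Fp_unit_pow[OF assms False] by simp
  ultimately have "c \<in> ?Sq" by simp
  thus ?thesis by blast
qed

lemma Z2_const: assumes "c \<in> Fp" "c \<noteq> 0" shows "Z2 c = Z2 1"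
proof -
  obtain r where r: "r ^ 2 = c" using Fp_square[OF assms(1)] by blast
  have r0: "r \<noteq> 0" using r assms(2) by auto
  have "{y. Tr (y ^ 2) = c} = (\<lambda>y. r * y) ` {y. Tr (y ^ 2) = 1}"
  proof -
    have eq: "Tr ((r * y) ^ 2) = c * Tr (y ^ 2)" for y
      using tr_scal[OF assms(1)] r by (simp add: power_mult_distrib)
    have "x \<in> (\<lambda>y. r * y) ` {y. Tr (y ^ 2) = 1}" if "Tr (x ^ 2) = c" for x
    proof (rule rev_image_eqI[of "x / r"])
      show "x = r * (x / r)" using r0 by simp
      have "c * Tr ((x / r) ^ 2) = c" using eq[of "x / r"] that r0 by simp
      thus "x / r \<in> {y. Tr (y ^ 2) = 1}" using assms(2) by simp
    qed
    thus ?thesis using eq by auto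
  qed
  moreover have "inj_on (\<lambda>y. r * y) {y. Tr (y ^ 2) = 1}" using r0 by (auto simp: inj_on_def)
  ultimately show ?thesis unfolding Z2_def by (simp add: card_image)
qed

lemma sum_Z2: "(\<Sum>t\<in>Fp. Z2 t) = p ^ m"
proof -
  have "range (\<lambda>y::'a. Tr (y ^ 2)) \<subseteq> Fp" using tr_Fp by auto
  thus ?thesis unfolding Z2_def using card_fibers[of "UNIV::'a set" Fp "\<lambda>y. Tr (y ^ 2)"] card_a by simp
qed

lemma card_prod_zero: "card {(s::'a, w). Tr (s * w) = 0} = p ^ m + (p ^ m - 1) * p ^ (m - 1)"
proof -
  have "card {(s::'a, w). Tr (s * w) = 0} = (\<Sum>w\<in>UNIV. card {s::'a. Tr (s * w) = 0})"
    by (rule card_pairs)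
  also have "\<dots> = card {s::'a. Tr (s * 0) = 0} + (\<Sum>w\<in>UNIV - {0}. card {s::'a. Tr (s * w) = 0})"
    by (rule sum.remove) auto
  also have "(\<Sum>w\<in>UNIV - {0}. card {s::'a. Tr (s * w) = 0}) = (\<Sum>w\<in>UNIV - {0::'a}. p ^ (m - 1))"
  proof (rule sum.cong[OF refl])
    fix w :: 'a assume "w \<in> UNIV - {0}"
    hence "card {s::'a. Tr (w * s) = 0} = p ^ (m - 1)" using tr_fiber_scaled Fp_0 by simp
    thus "card {s::'a. Tr (s * w) = 0} = p ^ (m - 1)" by (simp add: mult.commute)
  qed
  finally show ?thesis using card_a by (simp add: card_Diff_subset)
qed

lemma sumsq_Z2: "(\<Sum>t\<in>Fp. (Z2 t) ^ 2) = p ^ m + (p ^ m - 1) * p ^ (m - 1)"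
proof -
  let ?S = "{(y::'a, z). Tr (y ^ 2) = Tr (z ^ 2)}"
  let ?S' = "{(s::'a, w). Tr (s * w) = 0}"
  have "card ?S = (\<Sum>t\<in>Fp. card {x\<in>?S. (\<lambda>(y, z). Tr (y ^ 2)) x = t})"
    by (rule card_fibers) (auto simp: tr_Fp)
  also have "\<dots> = (\<Sum>t\<in>Fp. (Z2 t) ^ 2)"
  proof (rule sum.cong[OF refl])
    fix t assume "t \<in> Fp"
    have "{x\<in>?S. (\<lambda>(y, z). Tr (y ^ 2)) x = t} = {y. Tr (y ^ 2) = t} \<times> {z. Tr (z ^ 2) = t}" by auto
    thus "card {x\<in>?S. (\<lambda>(y, z). Tr (y ^ 2)) x = t} = (Z2 t) ^ 2"
      unfolding Z2_def by (simp add: card_cartesian_product power2_eq_square)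
  qed
  finally have s1: "card ?S = (\<Sum>t\<in>Fp. (Z2 t) ^ 2)" .
  let ?phi = "\<lambda>(y::'a, z::'a). (y - z, y + z)"
  have inj: "inj ?phi"
  proof (rule injI, clarsimp)
    fix y z y' z' :: 'a assume a: "y - z = y' - z'" "y + z = y' + z'"
    hence "2 * y = 2 * y'" by (metis add_diff_cancel_left' add_diff_eq diff_add_cancel mult_2)
    hence "y = y'" using two_ne0 by simp
    thus "y = y' \<and> z = z'" using a by simp
  qed
  have diffsq: "Tr (y ^ 2) - Tr (z ^ 2) = Tr ((y - z) * (y + z))" for y z :: 'a
    by (simp add: tr_diff[symmetric] power2_eq_square algebra_simps)
  have img: "?phi ` ?S = ?S'"
  proof
    show "?phi ` ?S \<subseteq> ?S'"
    proof
      fix x assume "x \<in> ?phi ` ?S"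
      then obtain y z where "Tr (y ^ 2) = Tr (z ^ 2)" "x = (y - z, y + z)" by auto
      thus "x \<in> ?S'" using diffsq[of y z] by simp
    qed
    show "?S' \<subseteq> ?phi ` ?S"
    proof (clarsimp)
      fix s w :: 'a assume sw: "Tr (s * w) = 0"
      let ?y = "(s + w) / 2" and ?z = "(w - s) / 2"
      have "(4::'a) = 2 * 2" by simp
      hence "(4::'a) \<noteq> 0" using two_ne0 by (metis mult_eq_0_iff)
      hence e1: "?y - ?z = s" "?y + ?z = w" using two_ne0 by (simp_all add: field_simps)
      hence "Tr (?y ^ 2) - Tr (?z ^ 2) = 0" using diffsq[of ?y ?z] sw by simp
      hence "(?y, ?z) \<in> ?S" by simp
      moreover have "(s, w) = ?phi (?y, ?z)" using e1 by simp
      ultimately show "(s, w) \<in> ?phi ` ?S" by (rule rev_image_eqI)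
    qed
  qed
  have "card (?phi ` ?S) = card ?S" by (rule card_image[OF inj_on_subset[OF inj subset_UNIV]])
  hence "card ?S' = card ?S" unfolding img .
  thus ?thesis using s1 card_prod_zero by simp
qed

end


context qf
begin

definition PP :: nat where "PP = p ^ (m - 1)"
definition g :: int where "g = int (Z2 1) - int PP"

lemma card_Fp0: "card (Fp - {0}) = p - 1" using card_Fp Fp_0 by (simp add: card_Diff_singleton)

lemma sum_Fp_split: "(\<Sum>t\<in>Fp. f (Z2 t)) = f (Z2 0) + of_nat (p - 1) * (f (Z2 1) :: 'b::comm_ring_1)"
proof -
  have "(\<Sum>t\<in>Fp. f (Z2 t)) = f (Z2 0) + (\<Sum>t\<in>Fp - {0}. f (Z2 t))"
    by (rule sum.remove) (simp_all add: Fp_0)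
  also have "(\<Sum>t\<in>Fp - {0}. f (Z2 t)) = (\<Sum>t\<in>Fp - {0}. f (Z2 1))"
    by (rule sum.cong) (auto simp: Z2_const)
  finally show ?thesis using card_Fp0 by simp
qed

lemma pPP: "p * PP = p ^ m" unfolding PP_def by (rule pm)

lemma Z2_one: "int (Z2 1) = int PP + g" unfolding g_def by simp

lemma Z2_zero: "int (Z2 0) = int PP - (int p - 1) * g"
proof -
  have "int (\<Sum>t\<in>Fp. Z2 t) = int (p ^ m)" using sum_Z2 by simp
  hence "(\<Sum>t\<in>Fp. int (Z2 t)) = int p * int PP" using pPP by (metis of_nat_mult of_nat_sum)
  hence "int (Z2 0) + int (p - 1) * int (Z2 1) = int p * int PP" using sum_Fp_split[of int] by simp
  moreover have "int (p - 1) = int p - 1" using p_gt1 by simp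
  ultimately show ?thesis using Z2_one by (simp add: algebra_simps)
qed

lemma g_sq: "int p * g ^ 2 = int PP"
proof -
  have "p ^ m + (p ^ m - 1) * p ^ (m - 1) = p * PP + (p * PP - 1) * PP" unfolding PP_def using pm by simp
  hence "int (\<Sum>t\<in>Fp. (Z2 t) ^ 2) = int (p * PP + (p * PP - 1) * PP)" using sumsq_Z2 by simp
  moreover have "p * PP \<ge> 1" using p_gt1 pPP by simp
  ultimately have "(\<Sum>t\<in>Fp. (int (Z2 t)) ^ 2) = int p * int PP + (int p * int PP - 1) * int PP"
    by (simp add: of_nat_diff)
  hence "int (Z2 0) ^ 2 + int (p - 1) * int (Z2 1) ^ 2 = int p * int PP + (int p * int PP - 1) * int PP"
    using sum_Fp_split[of "\<lambda>z. (int z) ^ 2"] by simp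
  moreover have "int (p - 1) = int p - 1" using p_gt1 by simp
  ultimately have "(int PP - (int p - 1) * g) ^ 2 + (int p - 1) * (int PP + g) ^ 2 = int p * int PP + (int p * int PP - 1) * int PP"
    using Z2_one Z2_zero by simp
  hence "(int p - 1) * (int p * g ^ 2 - int PP) = 0" by (simp add: algebra_simps power2_eq_square)
  moreover have "int p - 1 \<noteq> 0" using p_gt1 by simp
  ultimately show ?thesis by simp
qed

lemma zeta_ne1: "zeta p \<noteq> 1"
  using complex_root_unity_eq_1[of p 1] p_gt1 unfolding zeta_def by simp

lemma zeta_pow_p: "zeta p ^ p = 1"
proof -
  have "zeta p ^ p = exp (of_nat p * (2 * of_real pi * \<i> / of_nat p))"
    unfolding zeta_def by (rule exp_of_nat_mult[symmetric])
  also have "of_nat p * (2 * of_real pi * \<i> / of_nat p) = 2 * of_real pi * \<i>" using p_gt1 by simp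
  finally show ?thesis by simp
qed

lemma zeta_sum: "(\<Sum>k<p. zeta p ^ k) = 0"
  using geometric_sum[OF zeta_ne1, of p] zeta_pow_p by simp

definition idx :: "'a \<Rightarrow> nat" where "idx c = (THE k. k < p \<and> of_nat k = c)"

lemma idx_of_nat: "k < p \<Longrightarrow> idx (of_nat k) = k"
  unfolding idx_def by (rule the_equality) (auto dest: of_nat_inj)

lemma trace_nat_idx: "trace_nat p m x = idx (Tr x)"
  unfolding trace_nat_def idx_def ..

lemma card_sqrt: "int (card {y::'a. y ^ 2 = x}) - 1 = (if x = 0 then 0 else if (\<exists>y. y ^ 2 = x) then 1 else -1)"
proof (cases "x = 0")
  case True
  hence "{y::'a. y ^ 2 = x} = {0}" by auto
  thus ?thesis using True by simp
next
  case False
  show ?thesis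
  proof (cases "\<exists>y. y ^ 2 = x")
    case True
    then obtain r where r: "r ^ 2 = x" by blast
    hence "r \<noteq> 0" using False by auto
    hence "card {y\<in>UNIV - {0}. y ^ 2 = r ^ 2} = 2" by (rule card_sq_fiber)
    moreover have "{y\<in>UNIV - {0}. y ^ 2 = r ^ 2} = {y. y ^ 2 = x}" using r False by auto
    ultimately show ?thesis using True False by simp
  next
    case nsq: False
    hence "{y::'a. y ^ 2 = x} = {}" by auto
    thus ?thesis using False nsq by simp
  qed
qed

lemma quad_char_eq: "quad_char x = of_int (int (card {y::'a. y ^ 2 = x}) - 1)"
  unfolding quad_char_def card_sqrt by simp

lemma sum_quad_fiber: assumes "c \<in> Fp"
  shows "(\<Sum>x\<in>{x::'a. Tr x = c}. quad_char x) = of_int (int (Z2 c) - int PP)"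
proof -
  have "Z2 c = (\<Sum>x\<in>{x::'a. Tr x = c}. card {y\<in>{y. Tr (y ^ 2) = c}. y ^ 2 = x})"
    unfolding Z2_def by (rule card_fibers) auto
  also have "\<dots> = (\<Sum>x\<in>{x::'a. Tr x = c}. card {y::'a. y ^ 2 = x})"
    by (rule sum.cong[OF refl], rule arg_cong[where f=card]) auto
  finally have "int (Z2 c) = (\<Sum>x\<in>{x::'a. Tr x = c}. int (card {y::'a. y ^ 2 = x}))" by simp
  moreover have "(\<Sum>x\<in>{x::'a. Tr x = c}. (1::int)) = int PP" using tr_fiber[OF assms] unfolding PP_def by simp
  ultimately have "(\<Sum>x\<in>{x::'a. Tr x = c}. int (card {y::'a. y ^ 2 = x}) - 1) = int (Z2 c) - int PP"
    by (simp add: sum_subtractf)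
  hence "of_int (\<Sum>x\<in>{x::'a. Tr x = c}. int (card {y::'a. y ^ 2 = x}) - 1) = (of_int (int (Z2 c) - int PP) :: complex)"
    by simp
  thus ?thesis unfolding quad_char_eq of_int_sum by simp
qed

lemma sum_shift_p: "(\<Sum>k<p. f k) = f 0 + (\<Sum>k<p-1. f (Suc k))"
proof -
  obtain n where n: "p = Suc n" using p_gt1 by (cases p) auto
  show ?thesis unfolding n using sum.lessThan_Suc_shift[of f n] by simp
qed

lemma G_eq: "gauss_quad p m TYPE('a) = - of_int (int p * g)"
proof -
  let ?F = "\<lambda>x::'a. quad_char x * zeta p ^ trace_nat p m x"
  have "gauss_quad p m TYPE('a) = (\<Sum>x\<in>UNIV. ?F x)"
    unfolding gauss_quad_def by (rule sum.mono_neutral_left) (auto simp: quad_char_def)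
  also have "\<dots> = (\<Sum>c\<in>Fp. \<Sum>x\<in>{x\<in>UNIV. Tr x = c}. ?F x)"
    by (rule sum.group[symmetric]) (auto simp: tr_Fp)
  also have "\<dots> = (\<Sum>c\<in>Fp. zeta p ^ idx c * of_int (int (Z2 c) - int PP))"
  proof (rule sum.cong[OF refl])
    fix c assume c: "c \<in> Fp"
    have "(\<Sum>x\<in>{x\<in>UNIV. Tr x = c}. ?F x) = (\<Sum>x\<in>{x::'a. Tr x = c}. zeta p ^ idx c * quad_char x)"
      by (rule sum.cong) (auto simp: trace_nat_idx mult.commute)
    also have "\<dots> = zeta p ^ idx c * (\<Sum>x\<in>{x::'a. Tr x = c}. quad_char x)" by (simp add: sum_distrib_left)
    finally show "(\<Sum>x\<in>{x\<in>UNIV. Tr x = c}. ?F x) = zeta p ^ idx c * of_int (int (Z2 c) - int PP)"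
      using sum_quad_fiber[OF c] by simp
  qed
  also have "\<dots> = (\<Sum>k<p. zeta p ^ k * of_int (int (Z2 (of_nat k)) - int PP))"
  proof -
    have "inj_on (of_nat :: nat \<Rightarrow> 'a) {..<p}" using of_nat_inj by (auto simp: inj_on_def)
    thus ?thesis unfolding Fp_eq by (simp add: sum.reindex idx_of_nat)
  qed
  also have "\<dots> = zeta p ^ 0 * of_int (int (Z2 (of_nat 0)) - int PP) + (\<Sum>k<p-1. zeta p ^ Suc k * of_int (int (Z2 (of_nat (Suc k))) - int PP))"
    by (rule sum_shift_p)
  also have "(\<Sum>k<p-1. zeta p ^ Suc k * of_int (int (Z2 (of_nat (Suc k))) - int PP)) = (\<Sum>k<p-1. zeta p ^ Suc k * of_int g)"
  proof (rule sum.cong[OF refl])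
    fix k assume "k \<in> {..<p-1}"
    hence k: "Suc k < p" by simp
    have "(of_nat (Suc k) :: 'a) \<noteq> 0" using of_nat_inj[OF k, of 0] p_gt1 by auto
    hence "Z2 (of_nat (Suc k)) = Z2 1" using Z2_const of_nat_Fp by blast
    thus "zeta p ^ Suc k * of_int (int (Z2 (of_nat (Suc k))) - int PP) = zeta p ^ Suc k * of_int g"
      using Z2_one by simp
  qed
  also have "(\<Sum>k<p-1. zeta p ^ Suc k * (of_int g :: complex)) = of_int g * ((\<Sum>k<p. zeta p ^ k) - 1)"
  proof -
    have "(\<Sum>k<p. zeta p ^ k) = zeta p ^ 0 + (\<Sum>k<p-1. zeta p ^ Suc k)" by (rule sum_shift_p)
    thus ?thesis by (simp add: sum_distrib_left mult.commute)
  qed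
  finally show ?thesis using Z2_zero zeta_sum by (simp add: algebra_simps)
qed

end


context qf
begin

definition Aset :: "('a \<times> 'a) set" where "Aset = {(x, y). Tr (x + y ^ (p ^ u + 1)) = 0}"
definition Nset :: "'a \<Rightarrow> 'a \<Rightarrow> ('a \<times> 'a) set" where
  "Nset a b = {(x, y). Tr (x + y ^ (p ^ u + 1)) = 0 \<and> Tr (a * x + b * y) = 0}"

lemma tr_e: "Tr (x + y ^ (p ^ u + 1)) = Tr x + Q y" unfolding Q_def by (simp add: tr_add)

lemma qPP: "p ^ m * PP = PP * PP * p" using pPP by (simp add: ac_simps)

lemma card_Aset: "card Aset = p ^ m * PP"
proof -
  have "card Aset = (\<Sum>y\<in>UNIV. card {x::'a. Tr (x + y ^ (p ^ u + 1)) = 0})"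
    unfolding Aset_def by (rule card_pairs)
  also have "\<dots> = (\<Sum>y\<in>(UNIV::'a set). PP)"
  proof (rule sum.cong[OF refl])
    fix y :: 'a
    have "{x::'a. Tr (x + y ^ (p ^ u + 1)) = 0} = {x. Tr x = - Q y}" unfolding tr_e by (auto simp: eq_neg_iff_add_eq_0)
    thus "card {x::'a. Tr (x + y ^ (p ^ u + 1)) = 0} = PP"
      using tr_fiber[of "- Q y"] Fp_neg[OF tr_Fp] unfolding PP_def Q_def by simp
  qed
  finally show ?thesis using card_a by simp
qed

lemma D1_eq: "D1 p m u = Aset - {(0, 0)}"
  unfolding D1_def Aset_def by auto

lemma zero_Aset: "(0, 0) \<in> Aset" unfolding Aset_def by simp

lemma card_D1: "card (D1 p m u :: ('a \<times> 'a) set) = p ^ m * PP - 1"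
  unfolding D1_eq using zero_Aset card_Aset by (simp add: card_Diff_singleton)

lemma hw: "hweight p m u (codeword p m u a b) = p ^ m * PP - card (Nset a b)"
proof -
  have "{z \<in> D1 p m u. codeword p m u a b z \<noteq> 0} = Aset - Nset a b"
    unfolding D1_eq codeword_def Aset_def Nset_def D1_def by (auto split: if_splits)
  moreover have "Nset a b \<subseteq> Aset" unfolding Nset_def Aset_def by auto
  ultimately show ?thesis unfolding hweight_def using card_Aset by (simp add: card_Diff_subset)
qed

lemma Nset_notFp: assumes "a \<notin> Fp" shows "card (Nset a b) = PP * PP"
proof -
  have m2: "m \<ge> 2" by (rule m_ge2[OF assms])
  have "card (Nset a b) = (\<Sum>y\<in>UNIV. card {x::'a. Tr (x + y ^ (p ^ u + 1)) = 0 \<and> Tr (a * x + b * y) = 0})"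
    unfolding Nset_def by (rule card_pairs)
  also have "\<dots> = (\<Sum>y\<in>(UNIV::'a set). p ^ (m - 2))"
  proof (rule sum.cong[OF refl])
    fix y :: 'a
    have "{x::'a. Tr (x + y ^ (p ^ u + 1)) = 0 \<and> Tr (a * x + b * y) = 0} = {x. Tr x = - Q y \<and> Tr (a * x) = - Tr (b * y)}"
      unfolding tr_e by (auto simp: tr_add eq_neg_iff_add_eq_0)
    thus "card {x::'a. Tr (x + y ^ (p ^ u + 1)) = 0 \<and> Tr (a * x + b * y) = 0} = p ^ (m - 2)"
      using tr_two[OF assms] Fp_neg tr_Fp unfolding Q_def by simp
  qed
  also have "\<dots> = p ^ m * p ^ (m - 2)" using card_a by simp
  also have "\<dots> = PP * PP"
  proof -
    have "m + (m - 2) = (m - 1) + (m - 1)" using m2 by arith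
    thus ?thesis unfolding PP_def by (metis power_add)
  qed
  finally show ?thesis .
qed

lemma Nset_Fp: assumes "a \<in> Fp" shows "card (Nset a b) = card {y. a * Q y = Tr (b * y)} * PP"
proof -
  have "card (Nset a b) = (\<Sum>y\<in>UNIV. card {x::'a. Tr (x + y ^ (p ^ u + 1)) = 0 \<and> Tr (a * x + b * y) = 0})"
    unfolding Nset_def by (rule card_pairs)
  also have "\<dots> = (\<Sum>y\<in>(UNIV::'a set). if a * Q y = Tr (b * y) then PP else 0)"
  proof (rule sum.cong[OF refl])
    fix y :: 'a
    have "{x::'a. Tr (x + y ^ (p ^ u + 1)) = 0 \<and> Tr (a * x + b * y) = 0} = (if a * Q y = Tr (b * y) then {x. Tr x = - Q y} else {})"
    proof -
      have "(Tr (x + y ^ (p ^ u + 1)) = 0 \<and> Tr (a * x + b * y) = 0) \<longleftrightarrow> (a * Q y = Tr (b * y) \<and> Tr x = - Q y)" for x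
      proof -
        have e: "Tr (a * x + b * y) = a * Tr x + Tr (b * y)" using tr_add tr_scal[OF assms] by simp
        have f: "Tr (x + y ^ (p ^ u + 1)) = 0 \<longleftrightarrow> Tr x = - Q y" unfolding tr_e by (simp add: eq_neg_iff_add_eq_0)
        show ?thesis
        proof (cases "Tr x = - Q y")
          case True
          have "a * Tr x + Tr (b * y) = Tr (b * y) - a * Q y" using True by simp
          thus ?thesis unfolding e f using True by auto
        next
          case False thus ?thesis unfolding e f by simp
        qed
      qed
      thus ?thesis by auto
    qed
    thus "card {x::'a. Tr (x + y ^ (p ^ u + 1)) = 0 \<and> Tr (a * x + b * y) = 0} = (if a * Q y = Tr (b * y) then PP else 0)"
      using tr_fiber[of "- Q y"] Fp_neg[OF tr_Fp] unfolding PP_def Q_def by simp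
  qed
  also have "\<dots> = card {y. a * Q y = Tr (b * y)} * PP" using sum_if_const[of "UNIV::'a set"] by simp
  finally show ?thesis .
qed

definition Linv :: "'a \<Rightarrow> 'a" where "Linv = inv_into UNIV Lf"
lemma Lf_Linv: "Lf (Linv w) = w" unfolding Linv_def using Lf_bij by (simp add: bij_is_surj surj_f_inv_f)
lemma Linv_Lf: "Linv (Lf w) = w" unfolding Linv_def using Lf_inj by simp
lemma Linv_bij: "bij Linv" unfolding Linv_def using Lf_bij by (rule bij_imp_bij_inv)

definition z0 :: "'a \<Rightarrow> 'a \<Rightarrow> 'a" where "z0 a b = Linv (- b / a)"

lemma M_nz: assumes "a \<in> Fp" "a \<noteq> 0"
  shows "card {y. a * Q y = Tr (b * y)} = Z2 (Q (z0 a b))"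
proof -
  let ?z = "z0 a b"
  have Lz: "a * Lf ?z = - b" unfolding z0_def Lf_Linv using assms(2) by simp
  have key: "a * Q (y + ?z) = a * Q y + a * Q ?z - Tr (b * y)" for y
  proof -
    have "a * Tr (y * Lf ?z) = Tr (a * (y * Lf ?z))" by (rule tr_scal[OF assms(1), symmetric])
    also have "\<dots> = Tr (y * (a * Lf ?z))" by (simp add: ac_simps)
    also have "\<dots> = - Tr (b * y)" using Lz by (simp add: tr_neg[symmetric] ac_simps)
    finally show ?thesis unfolding Q_add by (simp add: algebra_simps)
  qed
  have "{y. a * Q y = Tr (b * y)} = {y. Q (y + ?z) = Q ?z}"
  proof -
    have "a * Q y = Tr (b * y) \<longleftrightarrow> Q (y + ?z) = Q ?z" for y
    proof -
      have "Q (y + ?z) = Q ?z \<longleftrightarrow> a * Q (y + ?z) = a * Q ?z" using assms(2) by simp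
      also have "\<dots> \<longleftrightarrow> a * Q y = Tr (b * y)" unfolding key by (simp add: algebra_simps)
      finally show ?thesis by simp
    qed
    thus ?thesis by simp
  qed
  also have "\<dots> = (\<lambda>y. y - ?z) ` {y. Q y = Q ?z}"
  proof
    show "{y. Q (y + ?z) = Q ?z} \<subseteq> (\<lambda>y. y - ?z) ` {y. Q y = Q ?z}"
    proof
      fix y assume "y \<in> {y. Q (y + ?z) = Q ?z}"
      hence "y + ?z \<in> {y. Q y = Q ?z}" "y = (y + ?z) - ?z" by auto
      thus "y \<in> (\<lambda>y. y - ?z) ` {y. Q y = Q ?z}" by (rule rev_image_eqI)
    qed
    show "(\<lambda>y. y - ?z) ` {y. Q y = Q ?z} \<subseteq> {y. Q (y + ?z) = Q ?z}" by auto
  qed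
  finally have "card {y. a * Q y = Tr (b * y)} = card {y. Q y = Q ?z}"
    by (simp add: card_image inj_on_def)
  thus ?thesis unfolding Z2_def Z_eq .
qed

definition wt :: "'a \<Rightarrow> 'a \<Rightarrow> nat" where "wt a b = hweight p m u (codeword p m u a b)"

definition w0 :: nat where "w0 = p ^ m * PP - PP * PP"
definition w1 :: nat where "w1 = p ^ m * PP - PP * Z2 0"
definition w2 :: nat where "w2 = p ^ m * PP - PP * Z2 1"

lemma wt_00: "wt 0 0 = 0"
proof -
  have "Nset 0 0 = Aset" unfolding Nset_def Aset_def by simp
  thus ?thesis unfolding wt_def hw by (simp add: card_Aset)
qed

lemma wt_0b: assumes "b \<noteq> 0" shows "wt 0 b = w0"
proof -
  have "card {y::'a. 0 * Q y = Tr (b * y)} = PP"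
  proof -
    have "{y::'a. 0 * Q y = Tr (b * y)} = {y. Tr (b * y) = 0}" by auto
    thus ?thesis using tr_fiber_scaled[OF assms Fp_0] unfolding PP_def by simp
  qed
  thus ?thesis unfolding wt_def hw Nset_Fp[OF Fp_0] w0_def by simp
qed

lemma wt_notFp: "a \<notin> Fp \<Longrightarrow> wt a b = w0"
  unfolding wt_def hw w0_def by (simp add: Nset_notFp)

lemma Z2_Q: "Z2 (Q z) = (if Q z = 0 then Z2 0 else Z2 1)"
  using Z2_const[OF tr_Fp] unfolding Q_def by auto

lemma wt_Fp: assumes "a \<in> Fp" "a \<noteq> 0" shows "wt a b = (if Q (z0 a b) = 0 then w1 else w2)"
  unfolding wt_def hw Nset_Fp[OF assms(1)] M_nz[OF assms] w1_def w2_def Z2_Q by (simp add: mult.commute)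

end


context qf
begin

lemma PP_ge_p: "PP \<ge> p"
proof -
  have "p ^ 1 \<le> p ^ (m - 1)" by (rule power_increasing) (use m_ge2' p_gt1 in auto)
  thus ?thesis unfolding PP_def by simp
qed

lemma PP_pos: "PP > 0" using PP_ge_p p_gt1 by simp

lemma g_ne0: "g \<noteq> 0" using g_sq PP_pos by auto

lemma bound1: "\<bar>(int p - 1) * g\<bar> < int PP"
proof -
  have a: "(int p - 1) ^ 2 < int p * int PP"
  proof -
    have "(int p - 1) ^ 2 < int p * int p" using p_gt1 by (simp add: power2_eq_square algebra_simps)
    also have "\<dots> \<le> int p * int PP" by (rule mult_left_mono) (use PP_ge_p in auto)
    finally show ?thesis .
  qed
  have "(int p - 1) ^ 2 * int PP < int p * int PP * int PP" using a PP_pos by simp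
  hence "int p * (((int p - 1) * g) ^ 2) < int p * (int PP) ^ 2"
    using g_sq by (simp add: power_mult_distrib power2_eq_square algebra_simps)
  hence "((int p - 1) * g) ^ 2 < (int PP) ^ 2" using p_gt1 by simp
  hence "\<bar>(int p - 1) * g\<bar> ^ 2 < (int PP) ^ 2" by simp
  thus ?thesis by (rule power2_less_imp_less) simp
qed

lemma bound2: "\<bar>g\<bar> < int PP"
proof -
  have "\<bar>g\<bar> \<le> \<bar>(int p - 1) * g\<bar>" using p_gt1 by (simp add: abs_mult mult_le_cancel_right1)
  thus ?thesis using bound1 by simp
qed

lemma Z2_le: "Z2 c \<le> p ^ m"
  unfolding Z2_def using card_mono[of "UNIV::'a set" "{y. Tr (y ^ 2) = c}"] card_a by simp

lemma iw0: "int w0 = (int p - 1) * int PP ^ 2"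
proof -
  have "PP \<le> p ^ m" using pPP[symmetric] p_gt1 by simp
  hence "PP * PP \<le> p ^ m * PP" by (rule mult_right_mono) simp
  thus ?thesis unfolding w0_def using pPP[symmetric] by (simp add: of_nat_diff power2_eq_square algebra_simps)
qed

lemma iw1: "int w1 = (int p - 1) * int PP * (int PP + g)"
proof -
  have "PP * Z2 0 \<le> p ^ m * PP" using Z2_le by (simp add: mult.commute)
  hence "int w1 = int (p ^ m * PP) - int PP * int (Z2 0)" unfolding w1_def by (simp add: of_nat_diff)
  thus ?thesis using Z2_zero pPP[symmetric] by (simp add: algebra_simps)
qed

lemma iw2: "int w2 = int PP * ((int p - 1) * int PP - g)"
proof -
  have "PP * Z2 1 \<le> p ^ m * PP" using Z2_le by (simp add: mult.commute)
  hence "int w2 = int (p ^ m * PP) - int PP * int (Z2 1)" unfolding w2_def by (simp add: of_nat_diff)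
  thus ?thesis using Z2_one pPP[symmetric] by (simp add: algebra_simps)
qed

lemma w_facts: "w0 \<noteq> 0" "w1 \<noteq> 0" "w2 \<noteq> 0" "w0 \<noteq> w1" "w0 \<noteq> w2" "w1 \<noteq> w2"
proof -
  have p1: "int p - 1 > 0" using p_gt1 by simp
  have P: "int PP > 0" using PP_pos by simp
  have g1: "int PP + g > 0" using bound2 by linarith
  have g2: "(int p - 1) * int PP - g > 0"
  proof -
    have "int PP \<le> (int p - 1) * int PP" using p1 P by simp
    thus ?thesis using bound2 by linarith
  qed
  have "int w0 > 0" unfolding iw0 using p1 P by simp
  thus "w0 \<noteq> 0" by simp
  have "int w1 > 0" unfolding iw1 using p1 P g1 by simp
  thus "w1 \<noteq> 0" by simp
  have "int w2 > 0" unfolding iw2 using P g2 by simp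
  thus "w2 \<noteq> 0" by simp
  have "int w1 - int w0 = (int p - 1) * int PP * g" unfolding iw0 iw1 by (simp add: algebra_simps power2_eq_square)
  thus "w0 \<noteq> w1" using p1 P g_ne0 by auto
  have "int w0 - int w2 = int PP * g" unfolding iw0 iw2 by (simp add: algebra_simps power2_eq_square)
  thus "w0 \<noteq> w2" using P g_ne0 by auto
  have "int w1 - int w2 = int p * int PP * g" unfolding iw1 iw2 by (simp add: algebra_simps)
  thus "w1 \<noteq> w2" using P g_ne0 p_gt1 by auto
qed

lemma wt_cases: "wt a b = (if a = 0 \<and> b = 0 then 0 else if a \<in> Fp - {0} then (if Q (z0 a b) = 0 then w1 else w2) else w0)"
proof -
  consider "a = 0 \<and> b = 0" | "a = 0 \<and> b \<noteq> 0" | "a \<in> Fp - {0}" | "a \<notin> Fp" by auto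
  thus ?thesis
  proof cases
    case 1 thus ?thesis using wt_00 by simp
  next
    case 2 thus ?thesis using wt_0b by simp
  next
    case 3 thus ?thesis using wt_Fp by auto
  next
    case 4 thus ?thesis using wt_notFp Fp_0 by auto
  qed
qed

lemma z0_card: assumes "a \<noteq> 0" shows "card {b. P (Q (z0 a b))} = card {z. P (Q z)}"
proof -
  have inj: "inj (z0 a)"
  proof (rule injI)
    fix b b' assume "z0 a b = z0 a b'"
    hence "Lf (z0 a b) = Lf (z0 a b')" by simp
    hence "- b / a = - b' / a" unfolding z0_def Lf_Linv .
    thus "b = b'" using assms by simp
  qed
  have surj: "surj (z0 a)"
  proof -
    have "z0 a (- (a * Lf z)) = z" for z unfolding z0_def using assms by (simp add: Linv_Lf)
    thus ?thesis by (rule surjI)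
  qed
  have "card ((z0 a) -` {z. P (Q z)}) = card {z. P (Q z)}"
    by (rule card_vimage_inj[OF inj]) (use surj in auto)
  moreover have "(z0 a) -` {z. P (Q z)} = {b. P (Q (z0 a b))}" by auto
  ultimately show ?thesis by simp
qed

lemma card_Q0: "card {z::'a. Q z = 0} = Z2 0" unfolding Z2_def by (rule Z_eq)

lemma card_Q1: "card {z::'a. Q z \<noteq> 0} = p ^ m - Z2 0"
proof -
  have "{z::'a. Q z \<noteq> 0} = UNIV - {z. Q z = 0}" by auto
  thus ?thesis using card_Q0 card_a by (simp add: card_Diff_subset)
qed

lemma cnt_sigma: "card {(a, b). a \<in> Fp - {0} \<and> P (Q (z0 a b))} = (p - 1) * card {z. P (Q z)}"
proof -
  have "{(a, b). a \<in> Fp - {0} \<and> P (Q (z0 a b))} = (SIGMA a:Fp - {0}. {b. P (Q (z0 a b))})" by auto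
  hence "card {(a, b). a \<in> Fp - {0} \<and> P (Q (z0 a b))} = (\<Sum>a\<in>Fp - {0}. card {b. P (Q (z0 a b))})"
    by (simp add: card_SigmaI)
  also have "\<dots> = (\<Sum>a\<in>Fp - {0}. card {z. P (Q z)})" by (rule sum.cong) (auto simp: z0_card)
  finally show ?thesis using card_Fp0 by simp
qed

lemma cnt0: "{(a, b). wt a b = 0} = {(0, 0)}"
  using w_facts by (auto simp: wt_cases split: if_splits)

lemma cnt1: "card {(a, b). wt a b = w1} = (p - 1) * Z2 0"
proof -
  have "{(a, b). wt a b = w1} = {(a, b). a \<in> Fp - {0} \<and> Q (z0 a b) = 0}"
    using w_facts by (auto simp: wt_cases split: if_splits)
  thus ?thesis using cnt_sigma[of "\<lambda>t. t = 0"] card_Q0 by simp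
qed

lemma cnt2: "card {(a, b). wt a b = w2} = (p - 1) * (p ^ m - Z2 0)"
proof -
  have "{(a, b). wt a b = w2} = {(a, b). a \<in> Fp - {0} \<and> Q (z0 a b) \<noteq> 0}"
    using w_facts by (auto simp: wt_cases split: if_splits)
  thus ?thesis using cnt_sigma[of "\<lambda>t. t \<noteq> 0"] card_Q1 by simp
qed

lemma wt_range: "range (\<lambda>(a, b). wt a b) = {0, w0, w1, w2}"
proof
  show "range (\<lambda>(a, b). wt a b) \<subseteq> {0, w0, w1, w2}" by (auto simp: wt_cases)
  have "0 \<in> range (\<lambda>(a, b). wt a b)" using wt_00 by (metis (no_types, lifting) case_prod_conv rangeI)
  moreover have "w0 \<in> range (\<lambda>(a, b). wt a b)" using wt_0b[of 1] by (metis (no_types, lifting) case_prod_conv rangeI one_neq_zero)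
  moreover have "w1 \<in> range (\<lambda>(a, b). wt a b)"
  proof -
    have "Lf 0 = 0" unfolding Lf_def using p_gt1 by (simp add: power_0_left)
    hence "z0 1 0 = 0" unfolding z0_def using Linv_Lf[of 0] by simp
    hence "wt 1 0 = w1" using wt_cases Fp_1 by simp
    thus ?thesis by (metis (no_types, lifting) case_prod_conv rangeI)
  qed
  moreover have "w2 \<in> range (\<lambda>(a, b). wt a b)"
  proof -
    have "Z2 0 < p ^ m"
    proof -
      have "- ((int p - 1) * g) < int PP" using bound1 by (simp add: abs_less_iff)
      hence "int (Z2 0) < 2 * int PP" using Z2_zero by linarith
      also have "2 * int PP \<le> int PP * int p"
        by (subst mult.commute, rule mult_right_mono) (use p_ge3 in auto)
      finally have "int (Z2 0) < int PP * int p" .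
      thus ?thesis using pPP by (simp add: mult.commute flip: of_nat_mult)
    qed
    hence "card {z::'a. Q z \<noteq> 0} > 0" using card_Q1 by simp
    then obtain z where z: "Q z \<noteq> 0" by (metis (mono_tags) card.empty empty_Collect_eq less_irrefl)
    have "z0 1 (- Lf z) = z" unfolding z0_def by (simp add: Linv_Lf)
    hence "wt 1 (- Lf z) = w2" using wt_cases Fp_1 z by simp
    thus ?thesis by (metis (no_types, lifting) case_prod_conv rangeI)
  qed
  ultimately show "{0, w0, w1, w2} \<subseteq> range (\<lambda>(a, b). wt a b)" by blast
qed

lemma cnt_w0: "card {(a, b). wt a b = w0} = p ^ (2 * m) - 1 - (p - 1) * p ^ m"
proof -
  have "card (UNIV :: ('a \<times> 'a) set) = (\<Sum>w\<in>{0, w0, w1, w2}. card {x\<in>UNIV. (\<lambda>(a, b). wt a b) x = w})"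
    by (rule card_fibers) (use wt_range in auto)
  also have "\<dots> = card {(a, b). wt a b = 0} + card {(a, b). wt a b = w0} + card {(a, b). wt a b = w1} + card {(a, b). wt a b = w2}"
  proof -
    have e: "{x\<in>UNIV. (\<lambda>(a, b). wt a b) x = w} = {(a, b). wt a b = w}" for w by auto
    show ?thesis unfolding e using w_facts by (simp add: add.assoc)
  qed
  finally have "p ^ m * p ^ m = 1 + card {(a, b). wt a b = w0} + (p - 1) * Z2 0 + (p - 1) * (p ^ m - Z2 0)"
    using cnt0 cnt1 cnt2 card_a by (simp add: card_cartesian_product)
  moreover have "(p - 1) * Z2 0 + (p - 1) * (p ^ m - Z2 0) = (p - 1) * p ^ m"
    using Z2_le by (simp add: add_mult_distrib2[symmetric])
  moreover have "p ^ (2 * m) = p ^ m * p ^ m" by (simp add: mult_2 power_add)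
  ultimately show ?thesis by linarith
qed

end


context qf
begin

lemma lin_help: "(x::'b::ring_1) + 1 + y = z \<Longrightarrow> x = z - 1 - y" by (simp add: algebra_simps)

lemma cw_inj: fixes a b a' b' :: 'a assumes "codeword p m u a b = codeword p m u a' b'" shows "a = a' \<and> b = b'"
proof -
  have "{z \<in> D1 p m u. codeword p m u (a - a') (b - b') z \<noteq> 0} = {}"
  proof -
    have "codeword p m u (a - a') (b - b') z = 0" if "z \<in> D1 p m u" for z
    proof -
      obtain x y where z: "z = (x, y)" by (cases z)
      have "codeword p m u a b (x, y) = codeword p m u a' b' (x, y)" using assms by simp
      hence "Tr (a * x + b * y) = Tr (a' * x + b' * y)" using that z unfolding codeword_def by simp
      moreover have "(a - a') * x + (b - b') * y = (a * x + b * y) - (a' * x + b' * y)" by (simp add: algebra_simps)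
      ultimately have "Tr ((a - a') * x + (b - b') * y) = 0" by (simp add: tr_diff)
      thus ?thesis using that z unfolding codeword_def by simp
    qed
    thus ?thesis by auto
  qed
  hence "wt (a - a') (b - b') = 0" unfolding wt_def hweight_def by simp
  hence "(a - a', b - b') \<in> {(a, b). wt a b = 0}" by simp
  thus ?thesis unfolding cnt0 by simp
qed

lemma C_eq: "code_CD1 p m u = (\<lambda>(a, b). codeword p m u a b) ` UNIV"
  unfolding code_CD1_def by auto

lemma inj_cw: "inj (\<lambda>(a, b). codeword p m u a b :: 'a \<times> 'a \<Rightarrow> 'a)"
  by (rule injI) (auto dest: cw_inj)

lemma card_C_filter: "card {c \<in> (code_CD1 p m u :: ('a \<times> 'a \<Rightarrow> 'a) set). P (hweight p m u c)} = card {(a, b). P (wt a b)}"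
proof -
  have "{c \<in> (code_CD1 p m u :: ('a \<times> 'a \<Rightarrow> 'a) set). P (hweight p m u c)} = (\<lambda>(a, b). codeword p m u a b) ` {(a, b). P (wt a b)}"
    unfolding C_eq wt_def by auto
  thus ?thesis using inj_cw by (simp add: card_image inj_on_subset)
qed

lemma hw_img: "hweight p m u ` (code_CD1 p m u :: ('a \<times> 'a \<Rightarrow> 'a) set) = {0, w0, w1, w2}"
proof -
  have "hweight p m u ` (code_CD1 p m u :: ('a \<times> 'a \<Rightarrow> 'a) set) = range (\<lambda>(a, b). wt a b)"
    unfolding C_eq wt_def image_image by (simp add: case_prod_beta')
  thus ?thesis using wt_range by simp
qed

lemma cnt_w0': "card {(a, b). wt a b = w0} + 1 + (p - 1) * p ^ m = p ^ (2 * m)"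
proof -
  have "(p - 1) * p ^ m < p * p ^ m" using p_gt1 by simp
  also have "p * p ^ m \<le> p ^ m * p ^ m" using p_gt1 m_pos by (simp add: mult_right_mono self_le_power)
  also have "\<dots> = p ^ (2 * m)" by (simp add: mult_2 power_add)
  finally show ?thesis using cnt_w0 by simp
qed

lemma main:
  fixes G q and C :: "('a \<times> 'a \<Rightarrow> 'a) set"
  assumes G: "G = gauss_quad p m TYPE('a)" and q: "q = complex_of_nat (p ^ m)" and C: "C = code_CD1 p m u"
  shows "card (D1 p m u :: ('a \<times> 'a) set) = p ^ (2 * m - 1) - 1
    \<and> card C = p ^ (2 * m)
    \<and> card (hweight p m u ` C - {0}) = 3
    \<and> card {c \<in> C. hweight p m u c = 0} = 1
    \<and> complex_of_nat (card {c \<in> C. hweight p m u c = (p - 1) * p ^ (2 * m - 2)})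
           = of_nat (p ^ (2 * m)) - 1 - of_nat (p - 1) * of_nat (p ^ m)
    \<and> (\<exists>w. complex_of_nat w = of_nat ((p - 1) * p ^ (2 * m - 2)) * (1 - G / q) \<and>
           complex_of_nat (card {c \<in> C. hweight p m u c = w})
             = of_nat ((p - 1) * p ^ (m - 1)) * (1 + of_nat (p - 1) * G / q))
    \<and> (\<exists>w. complex_of_nat w = of_nat ((p - 1) * p ^ (2 * m - 2)) * (1 + G / (of_nat (p - 1) * q)) \<and>
           complex_of_nat (card {c \<in> C. hweight p m u c = w})
             = of_nat ((p - 1) * p ^ (m - 1)) * (of_nat (p - 1) - of_nat (p - 1) * G / q))"
proof -
  define P :: complex where "P = of_nat PP"
  define pp :: complex where "pp = of_nat p"
  define gg :: complex where "gg = of_int g"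
  have P0: "P \<noteq> 0" unfolding P_def using PP_pos by simp
  have pp0: "pp \<noteq> 0" unfolding pp_def using p_gt1 by simp
  have pp1: "pp - 1 \<noteq> 0" unfolding pp_def using p_gt1 by simp
  have cp1: "complex_of_nat (p - 1) = pp - 1" unfolding pp_def using p_gt1 by (simp add: of_nat_diff)
  have cq: "q = pp * P" unfolding q P_def pp_def using pPP by (metis of_nat_mult)
  have cG: "G = - (pp * gg)" unfolding G G_eq pp_def gg_def by simp
  have e2: "2 * m - 2 = (m - 1) + (m - 1)" using m_pos by arith
  have pw: "p ^ (2 * m - 2) = PP * PP" unfolding e2 PP_def by (simp add: power_add)
  have cW: "complex_of_nat ((p - 1) * p ^ (2 * m - 2)) = (pp - 1) * P ^ 2"
    unfolding pw P_def using cp1 by (simp add: power2_eq_square)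
  have cM: "complex_of_nat ((p - 1) * p ^ (m - 1)) = (pp - 1) * P"
    unfolding P_def PP_def using cp1 by simp
  have w0e: "(p - 1) * p ^ (2 * m - 2) = w0"
  proof -
    have "int ((p - 1) * p ^ (2 * m - 2)) = int w0" unfolding iw0 pw using p_gt1 by (simp add: of_nat_diff power2_eq_square)
    thus ?thesis by (simp only: of_nat_eq_iff)
  qed
  have cZ0: "complex_of_nat (Z2 0) = P - (pp - 1) * gg"
  proof -
    have "complex_of_nat (Z2 0) = of_int (int (Z2 0))" by simp
    also have "\<dots> = P - (pp - 1) * gg" unfolding Z2_zero P_def pp_def gg_def by simp
    finally show ?thesis .
  qed
  have cw1: "complex_of_nat w1 = (pp - 1) * P * (P + gg)"
  proof -
    have "complex_of_nat w1 = of_int (int w1)" by simp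
    also have "\<dots> = (pp - 1) * P * (P + gg)" unfolding iw1 P_def pp_def gg_def by simp
    finally show ?thesis .
  qed
  have cw2: "complex_of_nat w2 = P * ((pp - 1) * P - gg)"
  proof -
    have "complex_of_nat w2 = of_int (int w2)" by simp
    also have "\<dots> = P * ((pp - 1) * P - gg)" unfolding iw2 P_def pp_def gg_def by simp
    finally show ?thesis .
  qed
  have s1: "card (D1 p m u :: ('a \<times> 'a) set) = p ^ (2 * m - 1) - 1"
  proof -
    have "2 * m - 1 = m + (m - 1)" using m_pos by arith
    thus ?thesis unfolding card_D1 PP_def by (simp add: power_add)
  qed
  have s2: "card C = p ^ (2 * m)"
    using card_C_filter[of "\<lambda>_. True"] card_a unfolding C by (simp add: mult_2 power_add)
  have s3: "card (hweight p m u ` C - {0}) = 3"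
    unfolding C hw_img using w_facts by auto
  have s4: "card {c \<in> C. hweight p m u c = 0} = 1"
    using card_C_filter[of "\<lambda>w. w = 0"] cnt0 unfolding C by simp
  have s5: "complex_of_nat (card {c \<in> C. hweight p m u c = (p - 1) * p ^ (2 * m - 2)})
           = of_nat (p ^ (2 * m)) - 1 - of_nat (p - 1) * of_nat (p ^ m)"
  proof -
    have "complex_of_nat (card {(a, b). wt a b = w0}) + 1 + of_nat (p - 1) * of_nat (p ^ m) = of_nat (p ^ (2 * m))"
      using arg_cong[OF cnt_w0', of complex_of_nat] unfolding of_nat_add of_nat_mult of_nat_1 .
    hence "complex_of_nat (card {(a, b). wt a b = w0}) = of_nat (p ^ (2 * m)) - 1 - of_nat (p - 1) * of_nat (p ^ m)"
      by (rule lin_help)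
    moreover have "card {c \<in> C. hweight p m u c = w0} = card {(a, b). wt a b = w0}"
      using card_C_filter[of "\<lambda>w. w = w0"] unfolding C by simp
    ultimately show ?thesis unfolding w0e by simp
  qed
  have s6: "\<exists>w. complex_of_nat w = of_nat ((p - 1) * p ^ (2 * m - 2)) * (1 - G / q) \<and>
           complex_of_nat (card {c \<in> C. hweight p m u c = w})
             = of_nat ((p - 1) * p ^ (m - 1)) * (1 + of_nat (p - 1) * G / q)"
  proof (intro exI conjI)
    show "complex_of_nat w1 = of_nat ((p - 1) * p ^ (2 * m - 2)) * (1 - G / q)"
      unfolding cw1 cW cG cq using P0 pp0 by (simp add: field_simps power2_eq_square)
    have "complex_of_nat (card {c \<in> C. hweight p m u c = w1}) = (pp - 1) * (P - (pp - 1) * gg)"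
    proof -
      have "card {c \<in> C. hweight p m u c = w1} = (p - 1) * Z2 0"
        using card_C_filter[of "\<lambda>w. w = w1"] cnt1 unfolding C by simp
      thus ?thesis using cp1 cZ0 by simp
    qed
    also have "\<dots> = of_nat ((p - 1) * p ^ (m - 1)) * (1 + of_nat (p - 1) * G / q)"
      unfolding cM cp1 cG cq using P0 pp0 by (simp add: field_simps)
    finally show "complex_of_nat (card {c \<in> C. hweight p m u c = w1}) = of_nat ((p - 1) * p ^ (m - 1)) * (1 + of_nat (p - 1) * G / q)" .
  qed
  have s7: "\<exists>w. complex_of_nat w = of_nat ((p - 1) * p ^ (2 * m - 2)) * (1 + G / (of_nat (p - 1) * q)) \<and>
           complex_of_nat (card {c \<in> C. hweight p m u c = w})
             = of_nat ((p - 1) * p ^ (m - 1)) * (of_nat (p - 1) - of_nat (p - 1) * G / q)"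
  proof (intro exI conjI)
    show "complex_of_nat w2 = of_nat ((p - 1) * p ^ (2 * m - 2)) * (1 + G / (of_nat (p - 1) * q))"
      unfolding cw2 cW cG cq cp1 using P0 pp0 pp1 by (simp add: field_simps power2_eq_square)
    have "p ^ m - Z2 0 + Z2 0 = p ^ m" using Z2_le by simp
    hence "complex_of_nat (p ^ m - Z2 0) = pp * P - (P - (pp - 1) * gg)"
      using cZ0 cq q by (metis add_diff_cancel_right' of_nat_add)
    hence "complex_of_nat (card {c \<in> C. hweight p m u c = w2}) = (pp - 1) * (pp * P - (P - (pp - 1) * gg))"
    proof -
      have "card {c \<in> C. hweight p m u c = w2} = (p - 1) * (p ^ m - Z2 0)"
        using card_C_filter[of "\<lambda>w. w = w2"] cnt2 unfolding C by simp
      thus ?thesis using cp1 \<open>complex_of_nat (p ^ m - Z2 0) = pp * P - (P - (pp - 1) * gg)\<close> by simp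
    qed
    also have "\<dots> = of_nat ((p - 1) * p ^ (m - 1)) * (of_nat (p - 1) - of_nat (p - 1) * G / q)"
      unfolding cM cp1 cG cq using P0 pp0 by (simp add: field_simps)
    finally show "complex_of_nat (card {c \<in> C. hweight p m u c = w2}) = of_nat ((p - 1) * p ^ (m - 1)) * (of_nat (p - 1) - of_nat (p - 1) * G / q)" .
  qed
  show ?thesis using s1 s2 s3 s4 s5 s6 s7 by blast
qed

end

theorem theorem2:
  fixes p m u v :: nat
    and F :: "'a::{finite,field} itself"
  assumes "prime p" and "odd p" and "m > 0" and "u > 0"
    and "CARD('a) = p ^ m"
    and "v = gcd m u"
    and "odd (m div v)" and "even v"
  defines "G \<equiv> gauss_quad p m (TYPE('a))"
    and "q \<equiv> complex_of_nat (p ^ m)"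
    and "C \<equiv> (code_CD1 p m u :: ('a \<times> 'a \<Rightarrow> 'a) set)"
  shows "card (D1 p m u :: ('a \<times> 'a) set) = p ^ (2 * m - 1) - 1
    \<and> card C = p ^ (2 * m)
    \<and> card (hweight p m u ` C - {0}) = 3
    \<and> card {c \<in> C. hweight p m u c = 0} = 1
    \<and> complex_of_nat (card {c \<in> C. hweight p m u c = (p - 1) * p ^ (2 * m - 2)})
           = of_nat (p ^ (2 * m)) - 1 - of_nat (p - 1) * of_nat (p ^ m)
    \<and> (\<exists>w. complex_of_nat w = of_nat ((p - 1) * p ^ (2 * m - 2)) * (1 - G / q) \<and>
           complex_of_nat (card {c \<in> C. hweight p m u c = w})
             = of_nat ((p - 1) * p ^ (m - 1)) * (1 + of_nat (p - 1) * G / q))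
    \<and> (\<exists>w. complex_of_nat w = of_nat ((p - 1) * p ^ (2 * m - 2)) * (1 + G / (of_nat (p - 1) * q)) \<and>
           complex_of_nat (card {c \<in> C. hweight p m u c = w})
             = of_nat ((p - 1) * p ^ (m - 1)) * (of_nat (p - 1) - of_nat (p - 1) * G / q))"
proof -
  interpret qf p m "TYPE('a)" u v
    by unfold_locales (use assms in auto)
  show ?thesis by (rule main) (simp_all add: G_def q_def C_def)
qed

end
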